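(* Let $q$ be a prime power, $m\ge1$, $g_1,\dots,g_n\in\mathbb{F}_{q^m}$ linearly independent over $\mathbb{F}_q$, $\mathbf g=(g_1,\dots,g_n)$, $\mathbf r=(r_1,\dots,r_n)\in\mathbb{F}_{q^m}^n$. Identify $[f(x)\ \ g(x)]\in\mathcal{L}_q(x,q^m)^2$ with $Q(x,y)=f(x)+g(y)$. Then the interpolation module $\mathfrak M(\mathbf r)$ consists exactly of all $Q(x,y)=f(x)+g(y)$ with $f,g\in\mathcal{L}_q(x,q^m)$ such that $Q(g_i,r_i)=0$ for $i=1,\dots,n$.
   Context: Write $[i]:=q^i$. A $q$-linearized polynomial is $f(x)=\sum_{i=0}^{d}a_ix^{[i]}$ with $a_i\in\mathbb{F}_{q^m}$; $\mathcal{L}_q(x,q^m)$ is the ring of these under addition and composition $\circ$. $\Pi_{\mathbf g}(x)=\prod_{u\in\langle g_1,\dots,g_n\rangle}(x-u)$ ($\mathbb{F}_q$-span) is the $q$-annihilator polynomial, an element of $\mathcal{L}_q(x,q^m)$. $\Lambda_{\mathbf g,\mathbf r}(x)=\sum_{i=1}^n(-1)^{n-i}r_i\det(\mathfrak D_i(\mathbf g,x))/\det(M_n(g_1,\dots,g_n))$, where $M_n(v_1,\dots,v_s)$ is the $n\times s$ matrix with $(j,l)$ entry $v_l^{[j-1]}$ and $\mathfrak D_i(\mathbf g,x)$ is $M_n(g_1,\dots,g_n,x)$ with the $i$-th column removed; it lies in $\mathcal{L}_q(x,q^m)$ and $\Lambda_{\mathbf g,\mathbf r}(g_i)=r_i$.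 The interpolation module $\mathfrak M(\mathbf r)$ is the set of all $\beta\circ[\Pi_{\mathbf g}(x)\ \ 0]+\gamma\circ[-\Lambda_{\mathbf g,\mathbf r}(x)\ \ x]$ with $\beta,\gamma\in\mathcal{L}_q(x,q^m)$, where $h\circ[f_1\ f_2]:=[h\circ f_1\ \ h\circ f_2]$. *)

theory Defs
  imports "HOL-Computational_Algebra.Polynomial" "Jordan_Normal_Form.Determinant"
begin

text \<open>The field F_{q^m} is a finite field type 'a with CARD('a) = q^m.
  The subfield F_q is the set of elements fixed by the q-th power map.\<close>

definition Fq :: "nat \<Rightarrow> 'a::field set" where
  "Fq q = {x. x ^ q = x}"

definition Lq :: "nat \<Rightarrow> 'a::field poly set" where
  "Lq q = {f. \<forall>k. coeff f k \<noteq> 0 \<longrightarrow> (\<exists>i. k = q ^ i)}"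

definition Fq_lin_indep :: "nat \<Rightarrow> nat \<Rightarrow> (nat \<Rightarrow> 'a::field) \<Rightarrow> bool" where
  "Fq_lin_indep q n g \<longleftrightarrow>
     (\<forall>c. (\<forall>i<n. c i \<in> Fq q) \<longrightarrow> (\<Sum>i<n. c i * g i) = 0 \<longrightarrow> (\<forall>i<n. c i = 0))"

definition Fq_span :: "nat \<Rightarrow> nat \<Rightarrow> (nat \<Rightarrow> 'a::field) \<Rightarrow> 'a set" where
  "Fq_span q n g = {\<Sum>i<n. c i * g i | c. \<forall>i<n. c i \<in> Fq q}"

definition annih :: "nat \<Rightarrow> nat \<Rightarrow> (nat \<Rightarrow> 'a::field) \<Rightarrow> 'a poly" where
  "annih q n g = (\<Prod>u\<in>Fq_span q n g. [:- u, 1:])"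

text \<open>The n x (n+1) Moore-type matrix M_n(g_1,...,g_n,x) with polynomial entries
  (row j, column l, 0-indexed): g_l^{[j]} for l < n, and x^{[j]} in the last column.\<close>

definition moore_x :: "nat \<Rightarrow> nat \<Rightarrow> (nat \<Rightarrow> 'a::field) \<Rightarrow> 'a poly mat" where
  "moore_x q n g = mat n (n + 1)
     (\<lambda>(j, l). if l < n then [: g l ^ (q ^ j) :] else monom 1 (q ^ j))"

definition moore :: "nat \<Rightarrow> nat \<Rightarrow> (nat \<Rightarrow> 'a::field) \<Rightarrow> 'a mat" where
  "moore q n g = mat n n (\<lambda>(j, l). g l ^ (q ^ j))"

text \<open>D_i: M_n(g,x) with column i (0-indexed) removed.\<close>

definition Dmat :: "nat \<Rightarrow> nat \<Rightarrow> (nat \<Rightarrow> 'a::field) \<Rightarrow> nat \<Rightarrow> 'a poly mat" where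
  "Dmat q n g i = mat n n (\<lambda>(j, l). moore_x q n g $$ (j, if l < i then l else l + 1))"

text \<open>Lambda_{g,r}(x) = sum_{i=1}^n (-1)^{n-i} r_i det(D_i(g,x)) / det(M_n(g));
  with 0-indexed i the sign is (-1)^(n-1-i).\<close>

definition Lam :: "nat \<Rightarrow> nat \<Rightarrow> (nat \<Rightarrow> 'a::field) \<Rightarrow> (nat \<Rightarrow> 'a) \<Rightarrow> 'a poly" where
  "Lam q n g r = smult (inverse (det (moore q n g)))
     (\<Sum>i<n. smult ((-1) ^ (n - 1 - i) * r i) (det (Dmat q n g i)))"

text \<open>Interpolation module: all beta o [Pi 0] + gamma o [-Lambda x], beta, gamma in L_q.\<close>

definition interp_module :: "nat \<Rightarrow> nat \<Rightarrow> (nat \<Rightarrow> 'a::field) \<Rightarrow> (nat \<Rightarrow> 'a) \<Rightarrow> ('a poly \<times> 'a poly) set" where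
  "interp_module q n g r =
     {(pcompose \<beta> (annih q n g) + pcompose \<gamma> (- Lam q n g r),
       pcompose \<beta> 0 + pcompose \<gamma> [:0, 1:]) | \<beta> \<gamma>. \<beta> \<in> Lq q \<and> \<gamma> \<in> Lq q}"

end

theory Submission imports Defs "HOL-Number_Theory.Residues" begin
hide_const (open) UnivPoly.up_ring.monom UnivPoly.up_ring.coeff

lemma frob:
  fixes x y :: "'b::comm_semiring_1"
  assumes "prime CHAR('b)" "q = CHAR('b) ^ e"
  shows "(x + y) ^ (q ^ i) = x ^ (q ^ i) + y ^ (q ^ i)"
  by (rule freshmans_dream'[OF assms(1), of _ "e * i"]) (simp add: assms(2) power_mult)

lemma frob_sum:
  fixes f :: "'c \<Rightarrow> 'b::comm_semiring_1"
  assumes "prime CHAR('b)" "q = CHAR('b) ^ e"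
  shows "(sum f A) ^ (q ^ i) = (\<Sum>a\<in>A. f a ^ (q ^ i))"
  by (rule freshmans_dream_sum'[OF assms(1), of _ "e * i"]) (simp add: assms(2) power_mult)

lemma frob_neg:
  fixes x :: "'b::comm_ring_1"
  assumes "prime CHAR('b)" "q = CHAR('b) ^ e" "q \<ge> 1"
  shows "(- x) ^ (q ^ i) = - (x ^ (q ^ i))"
proof -
  have "(- x + x) ^ (q ^ i) = (-x) ^ (q ^ i) + x ^ (q ^ i)" by (rule frob[OF assms(1,2)])
  moreover have "q ^ i > 0" using assms(3) by simp
  ultimately have "(-x) ^ (q ^ i) + x ^ (q ^ i) = 0" by (metis add.left_inverse zero_power)
  thus ?thesis by (simp add: eq_neg_iff_add_eq_0)
qed

definition lin :: "nat \<Rightarrow> (nat \<Rightarrow> 'a::field) \<Rightarrow> nat \<Rightarrow> 'a poly" where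
  "lin q a N = (\<Sum>i<N. monom (a i) (q ^ i))"

lemma Lq_zero[simp]: "0 \<in> Lq q" by (simp add: Lq_def)
lemma Lq_add: "f \<in> Lq q \<Longrightarrow> h \<in> Lq q \<Longrightarrow> f + h \<in> Lq q"
  by (auto simp: Lq_def) (metis add.right_neutral)
lemma Lq_uminus: "f \<in> Lq q \<Longrightarrow> - f \<in> Lq q"
  by (auto simp: Lq_def)
lemma Lq_diff: "f \<in> Lq q \<Longrightarrow> h \<in> Lq q \<Longrightarrow> f - h \<in> Lq q"
  using Lq_add[of f q "-h"] Lq_uminus by fastforce
lemma Lq_smult: "f \<in> Lq q \<Longrightarrow> smult c f \<in> Lq q"
  by (auto simp: Lq_def)
lemma Lq_sum: "(\<And>i. i \<in> A \<Longrightarrow> f i \<in> Lq q) \<Longrightarrow> sum f A \<in> Lq q"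
  by (induction A rule: infinite_finite_induct) (auto intro: Lq_add)
lemma Lq_monom: "monom c (q ^ i) \<in> Lq q"
  by (auto simp: Lq_def coeff_monom split: if_splits)
lemma Lq_lin: "lin q a N \<in> Lq q"
  unfolding lin_def by (intro Lq_sum Lq_monom)

lemma pow_inj: "(q::nat) \<ge> 2 \<Longrightarrow> q ^ i = q ^ j \<longleftrightarrow> i = j"
  by (simp add: power_inject_exp)

lemma coeff_lin: "(q::nat) \<ge> 2 \<Longrightarrow> coeff (lin q a N) (q ^ j) = (if j < N then a j else 0)"
proof -
  assume q: "q \<ge> 2"
  have "coeff (lin q a N) (q ^ j) = (\<Sum>i<N. if q ^ i = q ^ j then a i else 0)"
    by (simp add: lin_def coeff_sum coeff_monom)
  also have "\<dots> = (\<Sum>i<N. if i = j then a i else 0)" using pow_inj[OF q] by simp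
  also have "\<dots> = (if j < N then a j else 0)" by simp
  finally show ?thesis .
qed

lemma poly_lin: "poly (lin q a N) x = (\<Sum>i<N. a i * x ^ (q ^ i))"
  by (simp add: lin_def poly_sum poly_monom)

lemma degree_lin: "degree (lin q a N) \<le> q ^ (N - 1)" if "q \<ge> 1"
  unfolding lin_def
proof (rule degree_sum_le)
  fix i assume "i \<in> {..<N}"
  hence "q ^ i \<le> q ^ (N - 1)" using that by (intro power_increasing) auto
  thus "degree (monom (a i) (q ^ i)) \<le> q ^ (N - 1)" using degree_monom_le order_trans by blast
qed simp

lemma Lq_rep:
  assumes q: "q \<ge> 2" and f: "f \<in> Lq q"
  shows "f = lin q (\<lambda>i. coeff f (q ^ i)) (Suc (degree f))"
proof (rule poly_eqI)
  fix k
  show "coeff f k = coeff (lin q (\<lambda>i. coeff f (q ^ i)) (Suc (degree f))) k"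
  proof (cases "\<exists>j. k = q ^ j")
    case True
    then obtain j where k: "k = q ^ j" by blast
    have "j < 2 ^ j" by (rule less_exp)
    also have "2 ^ j \<le> q ^ j" using q by (simp add: power_mono)
    finally have "j < q ^ j" .
    show ?thesis
    proof (cases "j < Suc (degree f)")
      case True thus ?thesis using coeff_lin[OF q, of "\<lambda>i. coeff f (q ^ i)" "Suc (degree f)" j] k by simp
    next
      case False
      hence "degree f < q ^ j" using \<open>j < q ^ j\<close> by linarith
      thus ?thesis using coeff_lin[OF q, of "\<lambda>i. coeff f (q ^ i)" "Suc (degree f)" j] k False coeff_eq_0[of f "q^j"] by simp
    qed
  next
    case False
    hence "coeff f k = 0" using f by (auto simp: Lq_def)
    moreover have "coeff (lin q (\<lambda>i. coeff f (q ^ i)) (Suc (degree f))) k = 0"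
      using Lq_lin[of q] False by (auto simp: Lq_def)
    ultimately show ?thesis by simp
  qed
qed

lemma Lq_coeff0: "q \<ge> 1 \<Longrightarrow> f \<in> Lq q \<Longrightarrow> coeff f 0 = 0"
  by (auto simp: Lq_def)

lemma Lq_poly0: "q \<ge> 1 \<Longrightarrow> f \<in> Lq q \<Longrightarrow> poly f 0 = 0"
  by (simp add: poly_0_coeff_0 Lq_coeff0)


lemma pcompose_X_power: "pcompose ([:0, 1:] ^ n) P = P ^ n"
proof (induction n)
  case (Suc n)
  have "pcompose ([:0, 1:] ^ Suc n) P = pcompose [:0, 1:] P * pcompose ([:0, 1:] ^ n) P"
    by (simp only: power_Suc pcompose_mult)
  also have "pcompose [:0, 1:] P = P" by (simp add: pcompose_pCons)
  finally show ?case using Suc by simp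
qed (simp add: pcompose_1)

lemma pcompose_monom: "pcompose (monom c n) P = smult c (P ^ n)"
  by (simp add: monom_altdef pcompose_smult pcompose_X_power)

lemma pcompose_lin: "pcompose (lin q a N) P = (\<Sum>i<N. smult (a i) (P ^ (q ^ i)))"
  by (simp add: lin_def pcompose_sum pcompose_monom)

locale chq =
  fixes q e :: nat and ty :: "'a::field itself"
  assumes ch: "prime CHAR('a)" and qe: "q = CHAR('a) ^ e" and q2: "q \<ge> 2"
begin

lemma q1: "q \<ge> 1" using q2 by simp

lemma chp: "prime CHAR('a poly)" using ch by simp
lemma qep: "q = CHAR('a poly) ^ e" using qe by simp

lemma Lq_power:
  assumes f: "(f :: 'a poly) \<in> Lq q"
  shows "f ^ (q ^ j) \<in> Lq q"
proof -
  let ?a = "\<lambda>i. coeff f (q ^ i)" and ?N = "Suc (degree f)"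
  have "f ^ (q ^ j) = (lin q ?a ?N) ^ (q ^ j)" using Lq_rep[OF q2 f] by simp
  also have "\<dots> = (\<Sum>i<?N. monom (?a i) (q ^ i) ^ (q ^ j))"
    unfolding lin_def by (rule frob_sum[OF chp qep])
  also have "\<dots> = (\<Sum>i<?N. monom (?a i ^ (q ^ j)) (q ^ (i + j)))"
    by (simp add: monom_power power_add)
  also have "\<dots> \<in> Lq q" by (intro Lq_sum Lq_monom)
  finally show ?thesis .
qed

lemma Lq_pcompose:
  assumes f: "(f :: 'a poly) \<in> Lq q" and P: "P \<in> Lq q"
  shows "pcompose f P \<in> Lq q"
proof -
  have "pcompose f P = pcompose (lin q (\<lambda>i. coeff f (q ^ i)) (Suc (degree f))) P"
    using Lq_rep[OF q2 f] by simp
  also have "\<dots> \<in> Lq q" unfolding pcompose_lin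
    by (intro Lq_sum Lq_smult Lq_power P)
  finally show ?thesis .
qed

lemma pcompose_neg:
  assumes f: "(f :: 'a poly) \<in> Lq q"
  shows "pcompose f (- P) = - pcompose f P"
proof -
  have "pcompose f (- P) = pcompose (lin q (\<lambda>i. coeff f (q ^ i)) (Suc (degree f))) (- P)"
    using Lq_rep[OF q2 f] by simp
  also have "\<dots> = - pcompose (lin q (\<lambda>i. coeff f (q ^ i)) (Suc (degree f))) P"
    unfolding pcompose_lin by (simp add: frob_neg[OF chp qep q1] sum_negf)
  also have "\<dots> = - pcompose f P" using Lq_rep[OF q2 f] by simp
  finally show ?thesis .
qed

lemma poly_Lq_add:
  assumes f: "(f :: 'a poly) \<in> Lq q"
  shows "poly f (x + y) = poly f x + poly f y"
proof -
  have "poly (lin q (\<lambda>i. coeff f (q ^ i)) (Suc (degree f))) (x + y)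
      = poly (lin q (\<lambda>i. coeff f (q ^ i)) (Suc (degree f))) x
      + poly (lin q (\<lambda>i. coeff f (q ^ i)) (Suc (degree f))) y"
    unfolding poly_lin by (simp add: frob[OF ch qe] distrib_left sum.distrib)
  thus ?thesis using Lq_rep[OF q2 f] by metis
qed

lemma poly_Lq_sum:
  assumes f: "(f :: 'a poly) \<in> Lq q"
  shows "poly f (sum h A) = (\<Sum>a\<in>A. poly f (h a))"
  by (induction A rule: infinite_finite_induct)
     (simp_all add: Lq_poly0[OF q1 f] poly_Lq_add[OF f])

lemma poly_Lq_neg:
  assumes f: "(f :: 'a poly) \<in> Lq q"
  shows "poly f (- x) = - poly f x"
proof -
  have "poly f (- x + x) = poly f (-x) + poly f x" by (rule poly_Lq_add[OF f])
  thus ?thesis using Lq_poly0[OF q1 f] by (simp add: eq_neg_iff_add_eq_0)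
qed

lemma Fq_pow: "(c :: 'a) \<in> Fq q \<Longrightarrow> c ^ (q ^ i) = c"
  by (induction i) (simp_all add: Fq_def power_mult)

lemma poly_Lq_scal:
  assumes f: "(f :: 'a poly) \<in> Lq q" and c: "c \<in> Fq q"
  shows "poly f (c * x) = c * poly f x"
proof -
  have "poly (lin q (\<lambda>i. coeff f (q ^ i)) (Suc (degree f))) (c * x)
      = c * poly (lin q (\<lambda>i. coeff f (q ^ i)) (Suc (degree f))) x"
    unfolding poly_lin by (simp add: power_mult_distrib Fq_pow[OF c] sum_distrib_left mult_ac del: sum.lessThan_Suc)
  thus ?thesis using Lq_rep[OF q2 f] by metis
qed

lemma Fq_add: "a \<in> Fq q \<Longrightarrow> b \<in> Fq q \<Longrightarrow> (a::'a) + b \<in> Fq q"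
  using frob[OF ch qe, of a b 1] by (simp add: Fq_def)
lemma Fq_neg: "a \<in> Fq q \<Longrightarrow> - (a::'a) \<in> Fq q"
  using frob_neg[OF ch qe q1, of a 1] by (simp add: Fq_def)
lemma Fq_diff: "a \<in> Fq q \<Longrightarrow> b \<in> Fq q \<Longrightarrow> (a::'a) - b \<in> Fq q"
  using Fq_add[of a "-b"] Fq_neg[of b] by simp

end


lemma pow_card_same:
  fixes x :: "'a :: {finite, field}"
  shows   "x ^ card (UNIV :: 'a set) = x"
proof (cases "x = 0")
  case False
  have "x * (\<Prod>y\<in>UNIV-{0}. x * y) = x * x ^ (card (UNIV :: 'a set) - 1) * \<Prod>(UNIV-{0})"
    by (simp add: prod.distrib mult_ac)
  also have "x * x ^ (card (UNIV :: 'a set) - 1) = x ^ Suc (card (UNIV :: 'a set) - 1)"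
    by (subst power_Suc) auto
  also have "Suc (card (UNIV :: 'a set) - 1) = card (UNIV :: 'a set)"
    using finite_UNIV_card_ge_0[where ?'a = 'a] by simp
  also have "(\<Prod>y\<in>UNIV-{0}. x * y) = (\<Prod>y\<in>UNIV-{0}. y)"
    by (rule prod.reindex_bij_witness[of _ "\<lambda>y. y / x" "\<lambda>y. x * y"]) (use False in auto)
  finally show ?thesis
    by simp
qed (use finite_UNIV_card_ge_0[where ?'a = 'a] in auto)

locale fq = chq q e ty for q e and ty :: "'a::{finite,field} itself" +
  fixes m :: nat
  assumes cardK: "card (UNIV :: 'a set) = q ^ m" and m1: "m \<ge> 1"
begin

lemma pow_qm: "(x :: 'a) ^ (q ^ m) = x"
  using pow_card_same[of x] cardK by simp

lemma Fq_card_le: "card (Fq q :: 'a set) \<le> q"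
proof -
  let ?P = "monom (1::'a) q - [:0, 1:]"
  have c0: "coeff [:0,1::'a:] q = 0" using q2 by (cases q) (auto simp: coeff_pCons split: nat.splits)
  have c: "coeff ?P q = 1" by (simp only: coeff_diff coeff_monom c0) simp
  hence nz: "?P \<noteq> 0" by (metis coeff_0 one_neq_zero)
  have deg: "degree ?P \<le> q" using q2
    by (intro degree_diff_le) (auto simp: degree_monom_le intro: order_trans[OF degree_monom_le])
  have "Fq q = {x. poly ?P x = 0}" by (auto simp: Fq_def poly_monom)
  hence "card (Fq q :: 'a set) = card {x. poly ?P x = 0}" by simp
  also have "\<dots> \<le> degree ?P" by (rule card_poly_roots_bound[OF nz])
  finally show ?thesis using deg by simp
qed

lemma Fq_card_ge: "q \<le> card (Fq q :: 'a set)"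
proof -
  define T where "T = lin q (\<lambda>_. 1::'a) m"
  have Tval: "poly T x = (\<Sum>i<m. x ^ (q ^ i))" for x by (simp add: T_def poly_lin)
  have img: "range (poly T) \<subseteq> Fq q"
  proof
    fix y assume "y \<in> range (poly T)"
    then obtain x where y: "y = poly T x" by blast
    obtain k where mk: "m = Suc k" using m1 by (cases m) auto
    have "y ^ (q ^ 1) = (\<Sum>i<m. (x ^ (q ^ i)) ^ (q ^ 1))" unfolding y Tval by (rule frob_sum[OF ch qe])
    also have "\<dots> = (\<Sum>i<m. x ^ (q ^ Suc i))" by (simp add: power_mult[symmetric] mult.commute)
    also have "\<dots> = (\<Sum>i<k. x ^ (q ^ Suc i)) + x ^ (q ^ m)" by (simp add: mk)
    also have "\<dots> = (\<Sum>i<k. x ^ (q ^ Suc i)) + x ^ (q ^ 0)" by (simp add: pow_qm)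
    also have "\<dots> = (\<Sum>i<m. x ^ (q ^ i))" unfolding mk sum.lessThan_Suc_shift by simp
    finally show "y \<in> Fq q" by (simp add: Fq_def y Tval)
  qed
  have fib: "card (poly T -` {y}) \<le> q ^ (m - 1)" for y
  proof -
    let ?P = "T - [:y:]"
    have "q ^ (m - 1) \<ge> 1" using q1 by simp
    hence "coeff ?P (q ^ (m - 1)) = 1" unfolding T_def using coeff_lin[OF q2, of "\<lambda>_. 1::'a" m "m - 1"] m1
      using q1 by (simp add: coeff_pCons split: nat.splits)
    hence nz: "?P \<noteq> 0" by auto
    have deg: "degree ?P \<le> q ^ (m - 1)"
      using degree_lin[OF q1, of "\<lambda>_. 1::'a" m] unfolding T_def
      by (intro degree_diff_le) auto
    have "poly T -` {y} = {x. poly ?P x = 0}" by auto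
    hence "card (poly T -` {y}) = card {x. poly ?P x = 0}" by simp
    also have "\<dots> \<le> degree ?P" by (rule card_poly_roots_bound[OF nz])
    finally show ?thesis using deg by simp
  qed
  have "q ^ m = card (UNIV :: 'a set)" using cardK by simp
  also have "(UNIV :: 'a set) = (\<Union>y\<in>range (poly T). poly T -` {y})" by auto
  also have "card \<dots> \<le> (\<Sum>y\<in>range (poly T). card (poly T -` {y}))" by (rule card_UN_le) simp
  also have "\<dots> \<le> (\<Sum>y\<in>range (poly T). q ^ (m - 1))" by (intro sum_mono fib)
  also have "\<dots> = card (range (poly T)) * q ^ (m - 1)" by simp
  also have "\<dots> \<le> card (Fq q :: 'a set) * q ^ (m - 1)"
    by (intro mult_right_mono card_mono img) auto
  finally have "q * q ^ (m - 1) \<le> card (Fq q :: 'a set) * q ^ (m - 1)"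
    using m1 by (simp add: power_eq_if split: if_splits)
  thus ?thesis using q1 by simp
qed

lemma Fq_card: "card (Fq q :: 'a set) = q"
  using Fq_card_le Fq_card_ge by simp

end


locale stp = fq q e ty m for q e and ty :: "'a::{finite,field} itself" and m +
  fixes n :: nat and g :: "nat \<Rightarrow> 'a"
  assumes indep: "Fq_lin_indep q n g"
begin

definition Vs :: "'a set" where "Vs = Fq_span q n g"
definition lc :: "(nat \<Rightarrow> 'a) \<Rightarrow> 'a" where "lc c = (\<Sum>i<n. c i * g i)"

lemma span_eq: "Vs = lc ` (PiE {..<n} (\<lambda>_. Fq q))"
proof
  show "Vs \<subseteq> lc ` (PiE {..<n} (\<lambda>_. Fq q))"
  proof
    fix u assume "u \<in> Vs"
    then obtain c where c: "\<forall>i<n. c i \<in> Fq q" "u = lc c" by (auto simp: Fq_span_def Vs_def lc_def)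
    have "restrict c {..<n} \<in> PiE {..<n} (\<lambda>_. Fq q)" using c by auto
    moreover have "lc (restrict c {..<n}) = u" using c by (simp add: lc_def)
    ultimately show "u \<in> lc ` (PiE {..<n} (\<lambda>_. Fq q))" by force
  qed
  show "lc ` (PiE {..<n} (\<lambda>_. Fq q)) \<subseteq> Vs" by (auto simp: Fq_span_def Vs_def lc_def PiE_def Pi_def)
qed

lemma lc_inj: "inj_on lc (PiE {..<n} (\<lambda>_. Fq q))"
proof
  fix c d assume c: "c \<in> PiE {..<n} (\<lambda>_. Fq q)" and d: "d \<in> PiE {..<n} (\<lambda>_. Fq q)"
    and eq: "lc c = lc d"
  have "(\<Sum>i<n. (c i - d i) * g i) = (\<Sum>i<n. c i * g i) - (\<Sum>i<n. d i * g i)"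
    by (simp only: left_diff_distrib sum_subtractf)
  hence "(\<Sum>i<n. (c i - d i) * g i) = 0" using eq by (simp add: lc_def)
  moreover have "\<forall>i<n. c i - d i \<in> Fq q"
  proof (intro allI impI)
    fix i assume "i < n"
    hence "c i \<in> Fq q" "d i \<in> Fq q" using c d by (auto simp: PiE_iff)
    thus "c i - d i \<in> Fq q" by (rule Fq_diff)
  qed
  ultimately have "\<forall>i<n. c i - d i = 0"
    using indep[unfolded Fq_lin_indep_def, rule_format, of "\<lambda>i. c i - d i"] by blast
  hence "\<And>i. i \<in> {..<n} \<Longrightarrow> c i = d i" by simp
  thus "c = d" by (rule PiE_ext[OF c d])
qed

lemma card_V: "card Vs = q ^ n"
proof -
  have "card Vs = card (PiE {..<n} (\<lambda>_. Fq q :: 'a set))" by (simp only: span_eq card_image[OF lc_inj])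
  also have "\<dots> = q ^ n" by (simp only: card_PiE finite_lessThan prod_constant Fq_card card_lessThan)
  finally show ?thesis .
qed

lemma finite_V: "finite Vs" by (rule finite)

lemma vanish_V:
  assumes f: "f \<in> Lq q" and z: "\<forall>i<n. poly f (g i) = 0" and u: "u \<in> Vs"
  shows "poly f u = 0"
proof -
  obtain c where c: "\<forall>i<n. c i \<in> Fq q" "u = lc c" using u by (auto simp: Fq_span_def Vs_def lc_def)
  have "poly f u = (\<Sum>i<n. poly f (c i * g i))" by (simp add: c lc_def poly_Lq_sum[OF f])
  also have "\<dots> = (\<Sum>i<n. c i * poly f (g i))" using c by (intro sum.cong refl poly_Lq_scal[OF f]) auto
  also have "\<dots> = 0" using z by simp
  finally show ?thesis .
qed

lemma Lq_small_zero:
  assumes f: "f \<in> Lq q" and z: "\<forall>i<n. poly f (g i) = 0" and deg: "degree f < q ^ n"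
  shows "f = 0"
proof (rule ccontr)
  assume nz: "f \<noteq> 0"
  have "q ^ n = card Vs" by (simp add: card_V)
  also have "\<dots> \<le> card {x. poly f x = 0}"
    using vanish_V[OF f z] by (intro card_mono poly_roots_finite nz) auto
  also have "\<dots> \<le> degree f" by (rule card_poly_roots_bound[OF nz])
  finally show False using deg by simp
qed

lemma INJ:
  assumes z: "\<forall>l<n. (\<Sum>j<n. c j * g l ^ (q ^ j)) = 0"
  shows "\<forall>j<n. c j = 0"
proof (cases "n = 0")
  case False
  have "degree (lin q c n) \<le> q ^ (n - 1)" by (rule degree_lin[OF q1])
  also have "\<dots> < q ^ n" using False q2 by (intro power_strict_increasing) auto
  finally have "lin q c n = 0" using z by (intro Lq_small_zero Lq_lin) (auto simp: poly_lin)
  thus ?thesis using coeff_lin[OF q2, of c n] by (metis coeff_0)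
qed simp

lemma INJ_on:
  assumes c: "c \<in> PiE {..<n} (\<lambda>_. UNIV)" and d: "d \<in> PiE {..<n} (\<lambda>_. UNIV)"
    and eq: "restrict (\<lambda>l. \<Sum>j<n. c j * g l ^ (q ^ j)) {..<n} = restrict (\<lambda>l. \<Sum>j<n. d j * g l ^ (q ^ j)) {..<n}"
  shows "c = d"
proof -
  have "\<forall>l<n. (\<Sum>j<n. (c j - d j) * g l ^ (q ^ j)) = 0"
  proof (intro allI impI)
    fix l assume "l < n"
    hence "(\<Sum>j<n. c j * g l ^ (q ^ j)) = (\<Sum>j<n. d j * g l ^ (q ^ j))" using fun_cong[OF eq, of l] by simp
    thus "(\<Sum>j<n. (c j - d j) * g l ^ (q ^ j)) = 0" by (simp add: left_diff_distrib sum_subtractf)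
  qed
  from INJ[OF this] show ?thesis using c d by (intro PiE_ext[OF c d]) auto
qed

lemma SURJ: "\<exists>c. \<forall>l<n. (\<Sum>j<n. c j * g l ^ (q ^ j)) = b l"
proof -
  define D where "D = PiE {..<n} (\<lambda>_. UNIV :: 'a set)"
  define F where "F = (\<lambda>c. restrict (\<lambda>l. \<Sum>j<n. c j * g l ^ (q ^ j)) {..<n})"
  have inj: "inj_on F D" unfolding D_def F_def by (rule inj_onI) (rule INJ_on)
  have sub: "F ` D \<subseteq> D"
  proof (rule image_subsetI)
    fix c show "F c \<in> D" unfolding F_def D_def by (simp only: restrict_PiE_iff) simp
  qed
  have fin: "finite D" unfolding D_def by (rule finite_PiE) simp_all
  have "card (F ` D) = card D" using inj by (rule card_image)
  with fin sub have eq: "F ` D = D" using card_subset_eq by blast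
  have "restrict b {..<n} \<in> D" unfolding D_def by (simp only: restrict_PiE_iff) simp
  hence "restrict b {..<n} \<in> F ` D" by (simp only: eq)
  then obtain c where c': "restrict b {..<n} = F c" by (rule imageE)
  hence c: "F c = restrict b {..<n}" by (rule sym)
  have "\<forall>l<n. (\<Sum>j<n. c j * g l ^ (q ^ j)) = b l"
  proof (intro allI impI)
    fix l assume l: "l < n"
    have "F c l = restrict b {..<n} l" by (simp only: c)
    thus "(\<Sum>j<n. c j * g l ^ (q ^ j)) = b l" using l by (simp add: F_def)
  qed
  thus ?thesis by blast
qed

lemma moore_det: "det (moore q n g) \<noteq> 0"
proof
  assume d0: "det (moore q n g) = 0"
  have M: "moore q n g \<in> carrier_mat n n" by (simp add: moore_def)
  have "det (transpose_mat (moore q n g)) = 0" using d0 det_transpose[OF M] by simp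
  then obtain v where v: "v \<in> carrier_vec n" "v \<noteq> 0\<^sub>v n" "transpose_mat (moore q n g) *\<^sub>v v = 0\<^sub>v n"
    using det_0_iff_vec_prod_zero_field[of "transpose_mat (moore q n g)" n] M by auto
  have "\<forall>l<n. (\<Sum>j<n. (v $ j) * g l ^ (q ^ j)) = 0"
  proof (intro allI impI)
    fix l assume l: "l < n"
    have "(transpose_mat (moore q n g) *\<^sub>v v) $ l = 0" using v(3) l by simp
    moreover have "(transpose_mat (moore q n g) *\<^sub>v v) $ l = (\<Sum>j<n. (v $ j) * g l ^ (q ^ j))"
      using l v(1) by (auto simp: mult_mat_vec_def scalar_prod_def moore_def mult.commute lessThan_atLeast0 intro!: sum.cong)
    ultimately show "(\<Sum>j<n. (v $ j) * g l ^ (q ^ j)) = 0" by simp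
  qed
  from INJ[OF this] have "v = 0\<^sub>v n" using v(1) by (intro eq_vecI) auto
  thus False using v(2) by simp
qed


definition Pi where "Pi = annih q n g"

lemma g_in_V: "i < n \<Longrightarrow> g i \<in> Vs"
proof -
  assume i: "i < n"
  have "(\<lambda>j. if j = i then 1 else 0) j \<in> Fq q" for j using q1 by (simp add: Fq_def)
  hence "(\<Sum>j<n. (if j = i then 1 else 0) * g j) \<in> Vs" unfolding Vs_def Fq_span_def
    using q1 by (intro CollectI exI[of _ "\<lambda>j. if j = i then 1 else 0"]) (auto simp: Fq_def)
  moreover have "(\<Sum>j<n. (if j = i then 1 else 0) * g j) = (\<Sum>j<n. if j = i then g j else 0)"
    by (rule sum.cong) auto
  moreover have "(\<Sum>j<n. if j = i then g j else 0) = g i" using i by (subst sum.delta) auto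
  ultimately show ?thesis by simp
qed

lemma Pi_root: "u \<in> Vs \<Longrightarrow> poly Pi u = 0"
  unfolding Pi_def annih_def poly_prod Vs_def[symmetric]
  by (rule prod_zero[OF finite_V]) auto

lemma Pi_deg: "degree Pi = q ^ n"
proof -
  have "degree Pi = (\<Sum>u\<in>Vs. degree [:-u, 1::'a:])" unfolding Pi_def annih_def Vs_def[symmetric]
    by (rule degree_prod_eq_sum_degree) auto
  also have "\<dots> = card Vs" by simp
  finally show ?thesis by (simp add: card_V)
qed

lemma Pi_lc: "lead_coeff Pi = 1"
  unfolding Pi_def annih_def by (simp add: lead_coeff_prod)

lemma Pi_Lq: "Pi \<in> Lq q"
proof -
  obtain c where c: "\<forall>l<n. (\<Sum>j<n. c j * g l ^ (q ^ j)) = - (g l ^ (q ^ n))"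
    using SURJ[of "\<lambda>l. - (g l ^ (q ^ n))"] by blast
  define L where "L = monom 1 (q ^ n) + lin q c n"
  have LLq: "L \<in> Lq q" unfolding L_def by (intro Lq_add Lq_monom Lq_lin)
  have Lz: "\<forall>i<n. poly L (g i) = 0" using c by (simp add: L_def poly_lin poly_monom)
  have cL: "coeff L (q ^ n) = 1" using coeff_lin[OF q2, of c n n] by (simp add: L_def)
  have dL: "degree L \<le> q ^ n"
  proof -
    have "degree (lin q c n) \<le> q ^ (n - 1)" by (rule degree_lin[OF q1])
    also have "\<dots> \<le> q ^ n" using q1 by (intro power_increasing) auto
    finally show ?thesis unfolding L_def by (intro degree_add_le) (auto simp: degree_monom_le)
  qed
  have "L = Pi"
  proof (rule poly_eqI_degree_lead_coeff[of L "q ^ n" Pi Vs])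
    show "coeff L (q ^ n) = coeff Pi (q ^ n)" using cL Pi_lc Pi_deg by simp
    show "q ^ n \<le> card Vs" by (simp add: card_V)
    show "degree L \<le> q ^ n" by (rule dL)
    show "degree Pi \<le> q ^ n" by (simp add: Pi_deg)
    fix z assume "z \<in> Vs"
    thus "poly L z = poly Pi z" using vanish_V[OF LLq Lz] Pi_root by simp
  qed
  thus ?thesis using LLq by simp
qed

lemma Lq_lead:
  assumes f: "f \<in> Lq q" and nz: "f \<noteq> 0"
  shows "\<exists>t. degree f = q ^ t"
proof -
  have "coeff f (degree f) \<noteq> 0" using nz by simp
  thus ?thesis using f unfolding Lq_def by blast
qed

lemma divide_Pi:
  assumes "F \<in> Lq q" and "\<forall>i<n. poly F (g i) = 0"
  shows "\<exists>\<beta>\<in>Lq q. F = pcompose \<beta> Pi"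
  using assms
proof (induction "degree F" arbitrary: F rule: less_induct)
  case less
  show ?case
  proof (cases "F = 0")
    case True
    thus ?thesis by (intro bexI[of _ 0]) simp_all
  next
    case False
    then obtain t where t: "degree F = q ^ t" using Lq_lead[OF less.prems(1)] by blast
    have tn: "n \<le> t"
    proof (rule ccontr)
      assume "\<not> n \<le> t"
      hence "degree F < q ^ n" using t q2 by (simp add: power_strict_increasing)
      hence "F = 0" using Lq_small_zero less.prems by blast
      thus False using False by simp
    qed
    define s where "s = t - n"
    define c where "c = lead_coeff F"
    define G where "G = pcompose (monom c (q ^ s)) Pi"
    have Gs: "G = smult c (Pi ^ (q ^ s))" by (simp add: G_def pcompose_monom)
    have Pnz: "Pi \<noteq> 0" using Pi_lc by auto
    have dP: "degree (Pi ^ (q ^ s)) = q ^ t"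
      using tn by (simp add: degree_power_eq[OF Pnz] Pi_deg s_def power_add[symmetric])
    have lP: "lead_coeff (Pi ^ (q ^ s)) = 1" by (simp add: lead_coeff_power Pi_lc)
    have GLq: "G \<in> Lq q" unfolding G_def by (intro Lq_pcompose Lq_monom Pi_Lq)
    define F' where "F' = F - G"
    have F'Lq: "F' \<in> Lq q" unfolding F'_def by (intro Lq_diff less.prems(1) GLq)
    have Gz: "poly G (g i) = 0" if "i < n" for i
      using Pi_root[OF g_in_V[OF that]] q1 by (simp add: G_def poly_pcompose poly_monom)
    have F'z: "\<forall>i<n. poly F' (g i) = 0" using less.prems(2) Gz by (simp add: F'_def)
    have dF': "degree F' < degree F"
    proof (rule degree_lessI)
      show "F' \<noteq> 0 \<or> 0 < degree F" using t q1 by simp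
      show "\<forall>k\<ge>degree F. coeff F' k = 0"
      proof (intro allI impI)
        fix k assume k: "degree F \<le> k"
        show "coeff F' k = 0"
        proof (cases "k = degree F")
          case True
          thus ?thesis using dP lP t by (simp add: F'_def Gs c_def)
        next
          case False
          hence "degree F < k" using k by simp
          moreover have "degree (Pi ^ (q ^ s)) < k" using dP t \<open>degree F < k\<close> by simp
          ultimately show ?thesis by (simp add: F'_def Gs coeff_eq_0)
        qed
      qed
    qed
    obtain \<beta> where \<beta>: "\<beta> \<in> Lq q" "F' = pcompose \<beta> Pi" using less.hyps[OF dF' F'Lq F'z] by blast
    have "F = pcompose (\<beta> + monom c (q ^ s)) Pi" using \<beta>(2) unfolding pcompose_add F'_def G_def by (simp add: algebra_simps)
    moreover have "\<beta> + monom c (q ^ s) \<in> Lq q" by (intro Lq_add \<beta>(1) Lq_monom)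
    ultimately show ?thesis by blast
  qed
qed


lemma const_prod: "(\<Prod>i\<in>A. [:f i:]) = [:\<Prod>i\<in>A. f i:]"
  by (induction A rule: infinite_finite_induct) (simp_all add: mult.commute)

definition sh :: "nat \<Rightarrow> nat \<Rightarrow> nat" where "sh k l = (if l < k then l else l + 1)"

lemma Dmat_carrier: "Dmat q n g k \<in> carrier_mat n n"
  by (simp add: Dmat_def)

lemma Dmat_dims[simp]: "dim_row (Dmat q n g k) = n" "dim_col (Dmat q n g k) = n"
  by (simp_all add: Dmat_def)

lemma Dmat_entry:
  assumes "j < n" "l < n" "k < n"
  shows "Dmat q n g k $$ (j, l) = (if sh k l < n then [: g (sh k l) ^ (q ^ j) :] else monom 1 (q ^ j))"
proof -
  have "sh k l < n + 1" using assms by (simp add: sh_def)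
  thus ?thesis using assms by (simp add: Dmat_def moore_x_def sh_def)
qed

lemma signof_Lq: "X \<in> Lq q \<Longrightarrow> signof p * X \<in> Lq q"
  by (simp add: sign_def Lq_uminus)

lemma Dmat_Lq:
  assumes k: "k < n"
  shows "det (Dmat q n g k) \<in> Lq q"
proof -
  have "det (Dmat q n g k) = (\<Sum>p \<in> {p. p permutes {0..<n}}. signof p * (\<Prod>i = 0..<n. Dmat q n g k $$ (i, p i)))"
    by (rule det_def'[OF Dmat_carrier])
  also have "\<dots> \<in> Lq q"
  proof (rule Lq_sum, rule signof_Lq)
    fix p assume "p \<in> {p. p permutes {0..<n}}"
    hence p: "p permutes {0..<n}" by simp
    have n1: "n - 1 \<in> {0..<n}" using k by simp
    define i0 where "i0 = inv_into UNIV p (n - 1)"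
    have i0: "i0 \<in> {0..<n}" unfolding i0_def using n1 p by (simp add: permutes_inv permutes_in_image)
    have pi0: "p i0 = n - 1" unfolding i0_def using p by (simp add: permutes_inverses(1))
    have other: "p i < n - 1" if "i \<in> {0..<n}" "i \<noteq> i0" for i
    proof -
      have "p i \<in> {0..<n}" using p that(1) by (simp add: permutes_in_image)
      moreover have "p i \<noteq> n - 1" using pi0 that(2) p by (metis permutes_inj inj_eq)
      ultimately show ?thesis by auto
    qed
    have "(\<Prod>i = 0..<n. Dmat q n g k $$ (i, p i)) = Dmat q n g k $$ (i0, p i0) * (\<Prod>i\<in>{0..<n} - {i0}. Dmat q n g k $$ (i, p i))"
      by (rule prod.remove[OF _ i0]) simp
    also have "(\<Prod>i\<in>{0..<n} - {i0}. Dmat q n g k $$ (i, p i)) = (\<Prod>i\<in>{0..<n} - {i0}. [: g (sh k (p i)) ^ (q ^ i) :])"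
    proof (rule prod.cong[OF refl])
      fix i assume i: "i \<in> {0..<n} - {i0}"
      hence "p i < n - 1" using other by blast
      hence "sh k (p i) < n" by (simp add: sh_def) linarith
      thus "Dmat q n g k $$ (i, p i) = [: g (sh k (p i)) ^ (q ^ i) :]"
        using i k \<open>p i < n - 1\<close> by (subst Dmat_entry) auto
    qed
    also have "\<dots> = [: \<Prod>i\<in>{0..<n} - {i0}. g (sh k (p i)) ^ (q ^ i) :]" by (rule const_prod)
    also have "Dmat q n g k $$ (i0, p i0) = monom 1 (q ^ i0)"
    proof -
      have "\<not> sh k (n - 1) < n" using k by (simp add: sh_def)
      thus ?thesis using i0 k pi0 by (subst Dmat_entry) auto
    qed
    finally have "(\<Prod>i = 0..<n. Dmat q n g k $$ (i, p i)) = smult (\<Prod>i\<in>{0..<n} - {i0}. g (sh k (p i)) ^ (q ^ i)) (monom 1 (q ^ i0))"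
      by (simp add: mult.commute)
    thus "(\<Prod>i = 0..<n. Dmat q n g k $$ (i, p i)) \<in> Lq q" by (simp add: Lq_smult Lq_monom)
  qed
  finally show ?thesis .
qed


lemma poly_det: "poly (det A) x = det (map_mat (\<lambda>p. poly p x) A)"
proof -
  interpret ev: comm_ring_hom "\<lambda>p. poly p x" by unfold_locales simp_all
  show ?thesis by simp
qed

definition idx :: "nat \<Rightarrow> nat \<Rightarrow> nat \<Rightarrow> nat" where
  "idx i t l = (if l < i then l else if l < t then l + 1 else if l = t then i else l)"

definition W :: "nat \<Rightarrow> nat \<Rightarrow> 'a mat" where
  "W i t = mat n n (\<lambda>(j, l). g (idx i t l) ^ (q ^ j))"

lemma W_carrier: "W i t \<in> carrier_mat n n" by (simp add: W_def)

lemma W_start: "W i i = moore q n g"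
  by (rule eq_matI) (auto simp: W_def moore_def idx_def)

lemma W_step:
  assumes "i \<le> t" "t + 1 < n"
  shows "W i (t + 1) = swapcols t (t + 1) (W i t)"
  by (rule eq_matI) (use assms in \<open>auto simp: W_def idx_def\<close>)

lemma W_det:
  assumes "i \<le> t" "t < n"
  shows "det (W i t) = (-1) ^ (t - i) * det (moore q n g)"
  using assms
proof (induction t)
  case 0
  thus ?case by (simp add: W_start)
next
  case (Suc t)
  show ?case
  proof (cases "i = Suc t")
    case True
    thus ?thesis by (simp add: W_start)
  next
    case False
    hence it: "i \<le> t" using Suc.prems by simp
    have "det (W i (Suc t)) = det (swapcols t (t + 1) (W i t))" using W_step[OF it] Suc.prems by simp
    also have "\<dots> = - det (W i t)" using Suc.prems det_swapcols[of t n "t+1" "W i t"] W_carrier by simp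
    also have "\<dots> = (-1) ^ (Suc t - i) * det (moore q n g)" using Suc.IH[OF it] Suc.prems it
      by (simp add: Suc_diff_le)
    finally show ?thesis .
  qed
qed

lemma Dmat_eval:
  assumes i: "i < n" and k: "k < n"
  shows "poly (det (Dmat q n g k)) (g i) = (if k = i then (-1) ^ (n - 1 - i) * det (moore q n g) else 0)"
proof -
  let ?E = "map_mat (\<lambda>p. poly p (g i)) (Dmat q n g k)"
  have Ec: "?E \<in> carrier_mat n n" using Dmat_carrier by simp
  have Ee: "?E $$ (j, l) = g (if sh k l < n then sh k l else i) ^ (q ^ j)" if "j < n" "l < n" for j l
    using that Dmat_carrier[of k] k by (simp add: Dmat_entry poly_monom)
  show ?thesis
  proof (cases "k = i")
    case True
    have "?E = W i (n - 1)"
    proof (rule eq_matI)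
      fix j l assume j: "j < dim_row (W i (n - 1))" and l: "l < dim_col (W i (n - 1))"
      hence jl: "j < n" "l < n" by (auto simp: W_def)
      have "idx i (n - 1) l = (if sh k l < n then sh k l else i)"
        using jl i True by (auto simp: idx_def sh_def)
      thus "?E $$ (j, l) = W i (n - 1) $$ (j, l)" using Ee[OF jl] jl by (simp add: W_def)
    qed (auto simp: W_def)
    thus ?thesis using True W_det[of i "n - 1"] i by (simp add: poly_det)
  next
    case False
    define l1 where "l1 = (if i < k then i else i - 1)"
    have l1: "l1 < n" "l1 \<noteq> n - 1" "sh k l1 = i" using False i k by (auto simp: l1_def sh_def)
    have "col ?E l1 = col ?E (n - 1)"
    proof (rule eq_vecI)
      fix j assume "j < dim_vec (col ?E (n - 1))"
      hence j: "j < n" using Dmat_carrier[of k] by simp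
      have "\<not> sh k (n - 1) < n" using k by (simp add: sh_def)
      thus "col ?E l1 $ j = col ?E (n - 1) $ j" using j l1 i Dmat_carrier[of k] Ee[of j l1] Ee[of j "n - 1"]
        by simp
    qed (use Dmat_carrier[of k] in simp)
    hence "det ?E = 0" by (intro det_identical_columns[OF Ec l1(2)]) (use l1 i in auto)
    thus ?thesis using False by (simp add: poly_det)
  qed
qed

lemma Lam_Lq: "Lam q n g r \<in> Lq q"
  unfolding Lam_def by (intro Lq_smult Lq_sum Dmat_Lq) simp

lemma Lam_eval:
  assumes i: "i < n"
  shows "poly (Lam q n g r) (g i) = r i"
proof -
  have "poly (Lam q n g r) (g i) = inverse (det (moore q n g)) *
      (\<Sum>k<n. (-1) ^ (n - 1 - k) * r k * (if k = i then (-1) ^ (n - 1 - i) * det (moore q n g) else 0))"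
    unfolding Lam_def poly_smult poly_sum by (simp add: Dmat_eval i)
  also have "\<dots> = inverse (det (moore q n g)) * ((-1) ^ (n - 1 - i) * r i * ((-1) ^ (n - 1 - i) * det (moore q n g)))"
    using i by (simp add: if_distrib sum.delta cong: if_cong)
  also have "\<dots> = r i * (((-1) ^ (n - 1 - i) * (-1) ^ (n - 1 - i)) * (inverse (det (moore q n g)) * det (moore q n g)))"
    by (simp add: algebra_simps)
  also have "\<dots> = r i" using moore_det by (simp add: power_add[symmetric])
  finally show ?thesis .
qed


lemma main: "interp_module q n g r =
    {(f, h). f \<in> Lq q \<and> h \<in> Lq q \<and> (\<forall>i<n. poly f (g i) + poly h (r i) = 0)}"
proof (rule Set.set_eqI)
  fix x
  show "x \<in> interp_module q n g r \<longleftrightarrow> x \<in> {(f, h). f \<in> Lq q \<and> h \<in> Lq q \<and> (\<forall>i<n. poly f (g i) + poly h (r i) = 0)}"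
  proof
    assume "x \<in> interp_module q n g r"
    then obtain \<beta> \<gamma> where bg: "\<beta> \<in> Lq q" "\<gamma> \<in> Lq q"
      and x: "x = (pcompose \<beta> Pi + pcompose \<gamma> (- Lam q n g r), pcompose \<beta> 0 + pcompose \<gamma> [:0, 1:])"
      unfolding interp_module_def Pi_def by blast
    have s2: "pcompose \<beta> 0 + pcompose \<gamma> [:0, 1:] = \<gamma>"
      by (simp add: pcompose_0' Lq_coeff0[OF q1 bg(1)])
    have f1: "pcompose \<beta> Pi + pcompose \<gamma> (- Lam q n g r) \<in> Lq q"
      by (intro Lq_add Lq_pcompose bg Pi_Lq Lq_uminus Lam_Lq)
    have "poly (pcompose \<beta> Pi + pcompose \<gamma> (- Lam q n g r)) (g i) + poly \<gamma> (r i) = 0" if i: "i < n" for i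
    proof -
      have "poly (pcompose \<beta> Pi) (g i) = 0"
        using Pi_root[OF g_in_V[OF i]] Lq_poly0[OF q1 bg(1)] by (simp add: poly_pcompose)
      moreover have "poly (pcompose \<gamma> (- Lam q n g r)) (g i) = - poly \<gamma> (r i)"
        using Lam_eval[OF i] by (simp add: poly_pcompose poly_Lq_neg[OF bg(2)])
      ultimately show ?thesis by simp
    qed
    thus "x \<in> {(f, h). f \<in> Lq q \<and> h \<in> Lq q \<and> (\<forall>i<n. poly f (g i) + poly h (r i) = 0)}"
      using x s2 f1 bg by simp
  next
    assume "x \<in> {(f, h). f \<in> Lq q \<and> h \<in> Lq q \<and> (\<forall>i<n. poly f (g i) + poly h (r i) = 0)}"
    then obtain f h where x: "x = (f, h)" and fh: "f \<in> Lq q" "h \<in> Lq q"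
      and z: "\<forall>i<n. poly f (g i) + poly h (r i) = 0" by blast
    define F where "F = f + pcompose h (Lam q n g r)"
    have FL: "F \<in> Lq q" unfolding F_def by (intro Lq_add Lq_pcompose fh Lam_Lq)
    have Fz: "\<forall>i<n. poly F (g i) = 0" using z by (simp add: F_def poly_pcompose Lam_eval)
    obtain \<beta> where b: "\<beta> \<in> Lq q" "F = pcompose \<beta> Pi" using divide_Pi[OF FL Fz] by blast
    have e1: "pcompose \<beta> Pi + pcompose h (- Lam q n g r) = f"
      using b(2) by (simp add: pcompose_neg[OF fh(2)] F_def) (metis add_diff_cancel)
    have e2: "pcompose \<beta> 0 + pcompose h [:0, 1:] = h"
      by (simp add: pcompose_0' Lq_coeff0[OF q1 b(1)])
    have "(pcompose \<beta> (annih q n g) + pcompose h (- Lam q n g r), pcompose \<beta> 0 + pcompose h [:0, 1:]) \<in> interp_module q n g r"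
      unfolding interp_module_def using b(1) fh(2) by blast
    thus "x \<in> interp_module q n g r" using e1 e2 x by (simp add: Pi_def)
  qed
qed

end

lemma CHAR_eq_p:
  assumes p: "prime p" and k: "k \<ge> 1" and card: "card (UNIV :: 'a::{finite,field} set) = (p ^ k) ^ m"
  shows "CHAR('a) = p"
proof -
  have cp: "prime CHAR('a)" by (intro prime_CHAR_semidom finite_imp_CHAR_pos) simp
  have "CHAR('a) dvd (p ^ k) ^ m" using CHAR_dvd_CARD[where 'a='a] card by simp
  hence "CHAR('a) dvd p ^ (k * m)" by (simp add: power_mult)
  hence "CHAR('a) dvd p" using cp prime_dvd_power by blast
  thus ?thesis using cp p primes_dvd_imp_eq by blast
qed

theorem theorem21:
  fixes q m n :: nat and g r :: "nat \<Rightarrow> 'a::{finite, field}"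
  assumes "\<exists>p k. prime p \<and> k \<ge> 1 \<and> q = p ^ k"
    and "m \<ge> 1"
    and "card (UNIV :: 'a set) = q ^ m"
    and "Fq_lin_indep q n g"
  shows "interp_module q n g r =
    {(f, h). f \<in> Lq q \<and> h \<in> Lq q \<and> (\<forall>i<n. poly f (g i) + poly h (r i) = 0)}"
proof -
  obtain p k where p: "prime p" "k \<ge> 1" "q = p ^ k" using assms(1) by blast
  have ch: "CHAR('a) = p" using CHAR_eq_p[OF p(1,2)] assms(3) p(3) by simp
  have q2: "q \<ge> 2"
  proof -
    have "p \<ge> 2" using p(1) by (rule prime_ge_2_nat)
    also have "p \<le> p ^ k" using p(2) \<open>p \<ge> 2\<close> by (simp add: self_le_power)
    finally show ?thesis using p(3) by simp
  qed
  interpret stp q k "TYPE('a)" m n g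
  proof (unfold_locales)
    show "prime CHAR('a)" using ch p(1) by simp
    show "q = CHAR('a) ^ k" using ch p(3) by simp
  qed (use q2 assms in auto)
  show ?thesis by (rule main)
qed

end
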